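(* Let $\beta>0$, $T>0$, let $V:\mathbb{R}^d\to\mathbb{R}$ be smooth and $L:=\Delta-\langle\nabla V,\nabla\cdot\rangle$. Let $\Omega\subset\mathbb{R}^d$ be open and let $B_R(x_0)\subset\Omega$. Let $\nu>0$ be smooth and satisfy $\partial_t\nu=\beta\nu L\nu+\|\nabla\nu\|^2$, with $\nu(x,0)\geq c>0$ for all $x\in B_R(x_0)$. Then there exist constants $\epsilon,\tau>0$ depending only on $c,\beta,R,d,x_0,V$ such that \[ \nu(x,t)>\frac{\epsilon(R^2-\|x-x_0\|^2)}{t+\tau}\quad\forall (x,t)\in B_R(x_0)\times[0,T], \] equivalently, with $\nu=(\beta+1)\mu^\beta/\beta$, \[ \mu(x,t)>\Big(\frac{\beta\epsilon(R^2-\|x-x_0\|^2)}{(1+\beta)(t+\tau)}\Big)^{1/\beta}\quad\forall (x,t)\in B_R(x_0)\times[0,T]. \] *)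

theory Defs
  imports "HOL-Analysis.Analysis"
begin

text \<open>Smoothness (C-infinity) on an open set S: all iterated directional
  (Frechet) derivatives exist at every point of S. Since differentiability
  implies continuity, this is exactly the class of C-infinity functions on open S.\<close>
definition smooth_on :: "'a::real_normed_vector set \<Rightarrow> ('a \<Rightarrow> real) \<Rightarrow> bool" where
  "smooth_on S f \<longleftrightarrow>
     (\<forall>vs::'a list. \<forall>x\<in>S.
        (foldr (\<lambda>v g y. frechet_derivative g (at y) v) vs f) differentiable (at x))"

definition pderiv_i :: "(real^'n \<Rightarrow> real) \<Rightarrow> 'n \<Rightarrow> real^'n \<Rightarrow> real" where
  "pderiv_i f i x = frechet_derivative f (at x) (axis i 1)"

definition grad :: "(real^'n \<Rightarrow> real) \<Rightarrow> real^'n \<Rightarrow> real^'n" where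
  "grad f x = (\<chi> i. pderiv_i f i x)"

definition laplacian :: "(real^'n \<Rightarrow> real) \<Rightarrow> real^'n \<Rightarrow> real" where
  "laplacian f x = (\<Sum>i\<in>UNIV. pderiv_i (pderiv_i f i) i x)"

definition Lop :: "(real^'n \<Rightarrow> real) \<Rightarrow> (real^'n \<Rightarrow> real) \<Rightarrow> real^'n \<Rightarrow> real" where
  "Lop V f x = laplacian f x - grad V x \<bullet> grad f x"

end

theory Submission
  imports Defs
begin

lemma dir_deriv:
  fixes \<phi> :: "real^'n \<Rightarrow> real"
  assumes "\<phi> differentiable (at (x + s *\<^sub>R axis i 1))"
  shows "((\<lambda>s. \<phi> (x + s *\<^sub>R axis i 1)) has_real_derivative pderiv_i \<phi> i (x + s *\<^sub>R axis i 1)) (at s)"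
proof -
  let ?y = "x + s *\<^sub>R axis i 1"
  let ?D = "frechet_derivative \<phi> (at ?y)"
  have d: "(\<phi> has_derivative ?D) (at ?y)" using assms frechet_derivative_works by blast
  have l: "linear ?D" using d has_derivative_linear by blast
  have a: "((\<lambda>s. x + s *\<^sub>R axis i (1::real)) has_derivative (\<lambda>h. h *\<^sub>R axis i 1)) (at s)"
    by (auto intro!: derivative_eq_intros)
  have c: "((\<lambda>s. \<phi> (x + s *\<^sub>R axis i 1)) has_derivative (\<lambda>h. ?D (h *\<^sub>R axis i 1))) (at s)"
    using has_derivative_compose[OF a d] by simp
  have e: "(\<lambda>h. ?D (h *\<^sub>R axis i 1)) = (\<lambda>h. pderiv_i \<phi> i ?y * h)"
    using linear_cmul[OF l] by (auto simp: pderiv_i_def)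
  show ?thesis using c unfolding e has_field_derivative_def by simp
qed

lemma second_deriv_min:
  fixes h h' :: "real \<Rightarrow> real"
  assumes "\<delta> > 0" and "\<And>s. \<bar>s\<bar> < \<delta> \<Longrightarrow> (h has_real_derivative h' s) (at s)"
    and "h' 0 = 0" and "(h' has_real_derivative a) (at 0)"
    and "\<And>s. \<bar>s\<bar> < \<delta> \<Longrightarrow> h 0 \<le> h s"
  shows "a \<ge> 0"
proof (rule ccontr)
  assume "\<not> a \<ge> 0"
  then have "a < 0" by simp
  from DERIV_neg_dec_right[OF assms(4) this] obtain d where d: "d > 0"
    "\<And>k. k > 0 \<Longrightarrow> k < d \<Longrightarrow> h' (0 + k) < h' 0" by blast
  define s where "s = min d \<delta> / 2"
  have s: "s > 0" "s < d" "s < \<delta>" using d assms(1) by (auto simp: s_def)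
  obtain z where z: "z > 0" "z < s" "h s - h 0 = (s - 0) * h' z"
    using MVT2[of 0 s h h'] s assms(2) by force
  have "h' z < 0" using d(2)[of z] z s assms(3) by simp
  then have "s * h' z < 0" using s by (simp add: mult_pos_neg)
  then have "h s < h 0" using z by simp
  with assms(5)[of s] s show False by simp
qed


lemma w_hasd:
  fixes x0 :: "real^'n"
  shows "((\<lambda>y. k * (r2 - (norm (y - x0))\<^sup>2)) has_derivative (\<lambda>v. -2*k*((y-x0) \<bullet> v))) (at y)"
proof -
  have e: "(\<lambda>y. k * (r2 - (norm (y - x0))\<^sup>2)) = (\<lambda>y. k * (r2 - (y - x0) \<bullet> (y - x0)))"
    by (simp add: power2_norm_eq_inner)
  show ?thesis unfolding e
    by (auto intro!: derivative_eq_intros simp: algebra_simps inner_commute)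
qed

lemma w_pd:
  fixes x0 :: "real^'n"
  shows "pderiv_i (\<lambda>y. k * (r2 - (norm (y - x0))\<^sup>2)) i = (\<lambda>y. -2*k*((y-x0)$i))"
  by (rule ext) (simp add: pderiv_i_def frechet_derivative_at[OF w_hasd, symmetric] inner_axis)

lemma w_pd2_hasd:
  fixes x0 :: "real^'n"
  shows "((\<lambda>y. -2*k*((y-x0)$i)) has_derivative (\<lambda>v. -2*k*(v \<bullet> axis i 1))) (at y)"
proof -
  have e: "(\<lambda>y. -2*k*((y-x0)$i)) = (\<lambda>y. -2*k*((y-x0) \<bullet> axis i 1))"
    by (simp add: inner_axis)
  show ?thesis unfolding e
    by (auto intro!: derivative_eq_intros simp: algebra_simps inner_commute)
qed

lemma w_pd2:
  fixes x0 :: "real^'n"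
  shows "pderiv_i (\<lambda>y. -2*k*((y-x0)$i)) i y = -2*k"
  unfolding pderiv_i_def frechet_derivative_at[OF w_pd2_hasd, symmetric] by (simp add: inner_axis_axis)

lemma w_grad:
  fixes x0 :: "real^'n"
  shows "grad (\<lambda>y. k * (r2 - (norm (y - x0))\<^sup>2)) y = (-2*k) *\<^sub>R (y - x0)"
  by (simp add: grad_def w_pd vec_eq_iff)

lemma w_lap:
  fixes x0 :: "real^'n"
  shows "laplacian (\<lambda>y. k * (r2 - (norm (y - x0))\<^sup>2)) y = -2*k*real CARD('n)"
  unfolding laplacian_def w_pd w_pd2 by simp


lemma first_time:
  fixes f :: "(real^'n) \<times> real \<Rightarrow> real"
  assumes cont: "\<forall>p \<in> cball x0 r \<times> {0..T}. isCont f p"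
    and bad: "x1 \<in> cball x0 r" "t1 \<in> {0..T}" "f (x1,t1) \<le> 0"
    and init: "\<forall>x\<in>cball x0 r. f (x,0) > 0"
  shows "\<exists>x\<in>cball x0 r. \<exists>t\<in>{0<..T}. f (x,t) \<le> 0 \<and> (\<forall>y\<in>cball x0 r. \<forall>s\<in>{0..<t}. f (y,s) > 0)"
proof -
  let ?K = "cball x0 r \<times> {0..T}"
  have cK: "compact ?K" by (simp add: compact_Times)
  have co: "continuous_on ?K f" using cont continuous_at_imp_continuous_on by blast
  let ?Z = "{p \<in> ?K. f p \<le> (\<lambda>_. 0) p}"
  have clZ: "closed ?Z"
    by (rule continuous_on_closed_Collect_le[OF co]) (auto simp: closed_Times intro: compact_imp_closed)
  have "compact (?K \<inter> ?Z)" using compact_Int_closed[OF cK clZ] .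
  moreover have "?K \<inter> ?Z = ?Z" by blast
  ultimately have cZ: "compact ?Z" by simp
  have cS: "compact (snd ` ?Z)" by (rule compact_continuous_image[OF continuous_on_snd[OF continuous_on_id] cZ])
  have ne: "snd ` ?Z \<noteq> {}" using bad by force
  obtain t0 where t0: "t0 \<in> snd ` ?Z" "\<And>t. t \<in> snd ` ?Z \<Longrightarrow> t0 \<le> t"
    using compact_attains_inf[OF cS ne] by blast
  obtain xs where xs: "(xs, t0) \<in> ?Z" using t0(1) by force
  have t0pos: "t0 > 0"
  proof (rule ccontr)
    assume "\<not> t0 > 0"
    then have "t0 = 0" using xs by auto
    then show False using xs init by force
  qed
  have good: "\<forall>y\<in>cball x0 r. \<forall>s\<in>{0..<t0}. f (y,s) > 0"
  proof (intro ballI)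
    fix y s assume y: "y \<in> cball x0 r" and s: "s \<in> {0..<t0}"
    show "f (y,s) > 0"
    proof (rule ccontr)
      assume "\<not> f (y,s) > 0"
      then have "(y,s) \<in> ?Z" using y s xs by auto
      then have "s \<in> snd ` ?Z" by force
      then show False using t0(2) s by force
    qed
  qed
  have "xs \<in> cball x0 r" "t0 \<in> {0<..T}" "f (xs,t0) \<le> 0" using xs t0pos by auto
  then show ?thesis using good by blast
qed

lemma left_limit_nonneg:
  fixes g :: "real \<Rightarrow> real"
  assumes "isCont g t" "t > 0" "\<forall>s\<in>{0..<t}. g s > 0"
  shows "g t \<ge> 0"
proof (rule tendsto_lowerbound)
  show "(g \<longlongrightarrow> g t) (at_left t)"
    using assms(1) unfolding isCont_def by (rule tendsto_mono[OF at_le, rotated]) simp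
  show "\<forall>\<^sub>F s in at_left t. 0 \<le> g s"
    using eventually_at_left_real[OF assms(2)]
  proof eventually_elim
    case (elim s)
    then have "s \<in> {0..<t}" by simp
    then show ?case using assms(3) by (simp add: less_imp_le)
  qed
  show "at_left t \<noteq> bot" by (rule trivial_limit_at_left_real)
qed


lemma dir_deriv0:
  fixes \<phi> :: "real^'n \<Rightarrow> real"
  assumes "\<phi> differentiable (at x)"
  shows "((\<lambda>s. \<phi> (x + s *\<^sub>R axis i 1)) has_real_derivative pderiv_i \<phi> i x) (at 0)"
  using dir_deriv[of \<phi> x 0 i] assms by simp

lemma smooth0:
  assumes "smooth_on U \<nu>" "p \<in> U"
  shows "\<nu> differentiable (at p)"
  using assms unfolding smooth_on_def by (metis foldr.simps(1) id_apply)

lemma smooth1: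
  assumes "smooth_on U \<nu>" "p \<in> U"
  shows "(\<lambda>q. frechet_derivative \<nu> (at q) v) differentiable (at p)"
proof -
  have "foldr (\<lambda>v g y. frechet_derivative g (at y) v) [v] \<nu> differentiable (at p)"
    using assms unfolding smooth_on_def by blast
  then show ?thesis by simp
qed

lemma slice_hasd:
  fixes \<nu> :: "(real^'n) \<times> real \<Rightarrow> real"
  assumes "\<nu> differentiable (at (y,t))"
  shows "((\<lambda>z. \<nu> (z,t)) has_derivative (\<lambda>v. frechet_derivative \<nu> (at (y,t)) (v,0))) (at y)"
proof -
  have a: "((\<lambda>z. (z,t)) has_derivative (\<lambda>v. (v,0))) (at y)"
    by (auto intro!: derivative_eq_intros)
  have d: "(\<nu> has_derivative frechet_derivative \<nu> (at (y,t))) (at (y,t))"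
    using assms frechet_derivative_works by blast
  show ?thesis using has_derivative_compose[OF a d] by simp
qed

lemma slice_diff:
  fixes \<nu> :: "(real^'n) \<times> real \<Rightarrow> real"
  assumes "\<nu> differentiable (at (y,t))"
  shows "(\<lambda>z. \<nu> (z,t)) differentiable (at y)"
  using slice_hasd[OF assms] unfolding differentiable_def by blast

lemma slice_pd:
  fixes \<nu> :: "(real^'n) \<times> real \<Rightarrow> real"
  assumes "\<nu> differentiable (at (y,t))"
  shows "pderiv_i (\<lambda>z. \<nu> (z,t)) i y = frechet_derivative \<nu> (at (y,t)) (axis i 1, 0)"
  unfolding pderiv_i_def frechet_derivative_at[OF slice_hasd[OF assms], symmetric] by simp

lemma slice_pd_diff:
  fixes \<nu> :: "(real^'n) \<times> real \<Rightarrow> real"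
  assumes sm: "smooth_on U \<nu>" and S: "open S" "x \<in> S" "\<And>y. y \<in> S \<Longrightarrow> (y,t) \<in> U"
  shows "pderiv_i (\<lambda>z. \<nu> (z,t)) i differentiable (at x)"
proof -
  let ?Q = "\<lambda>p. frechet_derivative \<nu> (at p) (axis i 1, 0)"
  have "?Q differentiable (at (x,t))" using smooth1[OF sm S(3)[OF S(2)]] .
  then obtain Q' where Q': "(?Q has_derivative Q') (at (x,t))" unfolding differentiable_def by blast
  have a: "((\<lambda>z. (z,t)) has_derivative (\<lambda>v. (v,0))) (at x)"
    by (auto intro!: derivative_eq_intros)
  have c: "((\<lambda>z. ?Q (z,t)) has_derivative (\<lambda>v. Q' (v,0))) (at x)"
    using has_derivative_compose[OF a Q'] by simp
  have "(pderiv_i (\<lambda>z. \<nu> (z,t)) i has_derivative (\<lambda>v. Q' (v,0))) (at x)"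
  proof (rule has_derivative_transform_within_open[OF c S(1) S(2)])
    fix y assume "y \<in> S"
    then show "?Q (y,t) = pderiv_i (\<lambda>z. \<nu> (z,t)) i y"
      using slice_pd[OF smooth0[OF sm S(3)]] by simp
  qed
  then show ?thesis unfolding differentiable_def by blast
qed


lemma slice_t_diff:
  fixes \<nu> :: "(real^'n) \<times> real \<Rightarrow> real"
  assumes "\<nu> differentiable (at (y,t))"
  shows "(\<lambda>s. \<nu> (y,s)) differentiable (at t)"
proof -
  have a: "((\<lambda>s. (y,s)) has_derivative (\<lambda>v. (0,v))) (at t)"
    by (auto intro!: derivative_eq_intros)
  have d: "(\<nu> has_derivative frechet_derivative \<nu> (at (y,t))) (at (y,t))"
    using assms frechet_derivative_works by blast
  show ?thesis using has_derivative_compose[OF a d] unfolding differentiable_def by blast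
qed

lemma main_comp:
  fixes \<nu> :: "(real^'n) \<times> real \<Rightarrow> real" and V :: "real^'n \<Rightarrow> real" and x0 :: "real^'n"
  assumes \<beta>: "\<beta> > 0" and \<epsilon>: "\<epsilon> > 0" and \<tau>: "\<tau> > 0" and r: "0 < r" "r < R"
    and M: "M \<ge> 0" "\<forall>y\<in>cball x0 R. norm (grad V y) \<le> M"
    and \<epsilon>M: "8 * \<beta> * \<epsilon> * (real CARD('n) + M * R) \<le> 1"
    and \<tau>c: "2 * \<epsilon> * R\<^sup>2 / \<tau> < c"
    and T: "T > 0" and \<Omega>: "ball x0 R \<subseteq> \<Omega>" and U: "\<Omega> \<times> {0..T} \<subseteq> U" and sm: "smooth_on U \<nu>"
    and pos: "\<forall>x\<in>\<Omega>. \<forall>t\<in>{0..T}. \<nu> (x, t) > 0"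
    and pde: "\<forall>x\<in>\<Omega>. \<forall>t\<in>{0..T}.
        deriv (\<lambda>s. \<nu> (x, s)) t =
          \<beta> * \<nu> (x, t) * Lop V (\<lambda>y. \<nu> (y, t)) x + (norm (grad (\<lambda>y. \<nu> (y, t)) x))\<^sup>2"
    and init: "\<forall>x\<in>ball x0 R. \<nu> (x, 0) \<ge> c"
  shows "\<forall>y\<in>cball x0 r. \<forall>t\<in>{0..T}. \<nu> (y,t) > 2 * \<epsilon> * (r\<^sup>2 - (norm (y - x0))\<^sup>2) / (t + \<tau>)"
proof (rule ccontr)
  define f where "f p = \<nu> p - 2 * \<epsilon> * (r\<^sup>2 - (norm (fst p - x0))\<^sup>2) / (snd p + \<tau>)" for p
  assume "\<not> ?thesis"
  then obtain x1 t1 where x1: "x1 \<in> cball x0 r" "t1 \<in> {0..T}" "f (x1,t1) \<le> 0"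
    unfolding f_def by force
  have cb: "cball x0 r \<subseteq> ball x0 R" using r by (auto simp: subset_eq)
  have inU: "(y,t) \<in> U" if "y \<in> ball x0 R" "t \<in> {0..T}" for y t using that \<Omega> U by blast
  have cont: "\<forall>p \<in> cball x0 r \<times> {0..T}. isCont f p"
  proof
    fix p assume p: "p \<in> cball x0 r \<times> {0..T}"
    then have "p \<in> U" using cb inU by (cases p) auto
    then have "isCont \<nu> p" using smooth0[OF sm] differentiable_imp_continuous_within by blast
    moreover have "snd p + \<tau> \<noteq> 0" using p \<tau> by auto
    ultimately show "isCont f p" unfolding f_def
      by (intro continuous_intros) auto
  qed
  have finit: "\<forall>x\<in>cball x0 r. f (x,0) > 0"
  proof
    fix x assume x: "x \<in> cball x0 r"
    have "2 * \<epsilon> * (r\<^sup>2 - (norm (x - x0))\<^sup>2) / \<tau> \<le> 2 * \<epsilon> * R\<^sup>2 / \<tau>"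
    proof (rule divide_right_mono)
      have "r\<^sup>2 \<le> R\<^sup>2" using r by (simp add: power_mono)
      moreover have "(norm (x - x0))\<^sup>2 \<ge> 0" by simp
      ultimately have "r\<^sup>2 - (norm (x - x0))\<^sup>2 \<le> R\<^sup>2" by linarith
      then show "2 * \<epsilon> * (r\<^sup>2 - (norm (x - x0))\<^sup>2) \<le> 2 * \<epsilon> * R\<^sup>2" using \<epsilon> by simp
    qed (use \<tau> in simp)
    moreover have "\<nu> (x,0) \<ge> c" using init x cb by blast
    ultimately show "f (x,0) > 0" unfolding f_def using \<tau>c by simp
  qed
  obtain xs ts where xs: "xs \<in> cball x0 r" "ts \<in> {0<..T}" "f (xs,ts) \<le> 0"
    and before: "\<forall>y\<in>cball x0 r. \<forall>s\<in>{0..<ts}. f (y,s) > 0"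
    using first_time[OF cont x1 finit] by blast
  have fts: "f (y,ts) \<ge> 0" if y: "y \<in> cball x0 r" for y
  proof (rule left_limit_nonneg[where g="\<lambda>s. f (y,s)"])
    have "isCont f (y,ts)" using cont y xs(2) by auto
    moreover have "isCont (\<lambda>s. (y,s)) ts" by simp
    ultimately show "isCont (\<lambda>s. f (y,s)) ts" using isCont_o2[where f="\<lambda>s. (y,s)" and a=ts and g=f] by simp
  qed (use xs(2) before y in auto)
  have f0: "f (xs,ts) = 0" using fts[OF xs(1)] xs(3) by simp
  have xsb: "xs \<in> ball x0 r"
  proof (rule ccontr)
    assume "xs \<notin> ball x0 r"
    then have "norm (xs - x0) = r" using xs(1) by (simp add: dist_norm norm_minus_commute)
    moreover have "xs \<in> \<Omega>" using xs(1) cb \<Omega> by blast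
    then have "\<nu> (xs,ts) > 0" using pos xs(2) by auto
    ultimately have "f (xs,ts) > 0" unfolding f_def by simp
    then show False using f0 by simp
  qed

  define P where "P = ts + \<tau>"
  have P: "P > 0" using xs(2) \<tau> by (simp add: P_def)
  define k where "k = 2 * \<epsilon> / P"
  have k: "k > 0" using P \<epsilon> by (simp add: k_def)
  define wt where "wt = (\<lambda>y::real^'n. k * (r\<^sup>2 - (norm (y - x0))\<^sup>2))"
  define \<nu>t where "\<nu>t = (\<lambda>y. \<nu> (y,ts))"
  have tsT: "ts \<in> {0..T}" using xs(2) by auto
  have wf: "f (y,ts) = \<nu>t y - wt y" for y
    unfolding f_def \<nu>t_def wt_def k_def P_def by simp
  have \<nu>diff: "\<nu>t differentiable (at y)" if "y \<in> ball x0 R" for y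
    unfolding \<nu>t_def using slice_diff[OF smooth0[OF sm inU[OF that tsT]]] .
  have wdiff: "wt differentiable (at y)" for y
    unfolding wt_def using w_hasd unfolding differentiable_def by blast
  have minx: "\<nu>t xs - wt xs \<le> \<nu>t y - wt y" if "y \<in> cball x0 r" for y
    using fts[OF that] f0 wf by metis
  define \<delta> where "\<delta> = r - norm (xs - x0)"
  have \<delta>: "\<delta> > 0" using xsb by (simp add: \<delta>_def dist_norm norm_minus_commute)
  have inb: "xs + s *\<^sub>R axis i 1 \<in> ball x0 r" if "\<bar>s\<bar> < \<delta>" for s i
  proof -
    have "dist x0 (xs + s *\<^sub>R axis i 1) = norm ((x0 - xs) - s *\<^sub>R axis i 1)"
      by (simp add: dist_norm algebra_simps)
    also have "\<dots> \<le> norm (x0 - xs) + norm (s *\<^sub>R axis i (1::real))" by (rule norm_triangle_ineq4)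
    also have "\<dots> = norm (xs - x0) + \<bar>s\<bar>" by (simp add: norm_minus_commute)
    also have "\<dots> < r" using that by (simp add: \<delta>_def)
    finally show ?thesis by simp
  qed
  have rR: "ball x0 r \<subseteq> ball x0 R" using r by auto
  have gl: "pderiv_i \<nu>t i xs = pderiv_i wt i xs \<and> pderiv_i (pderiv_i \<nu>t i) i xs \<ge> pderiv_i (pderiv_i wt i) i xs" for i
  proof -
    let ?e = "axis i (1::real)"
    define h where "h = (\<lambda>s. \<nu>t (xs + s *\<^sub>R ?e) - wt (xs + s *\<^sub>R ?e))"
    define h' where "h' = (\<lambda>s. pderiv_i \<nu>t i (xs + s *\<^sub>R ?e) - pderiv_i wt i (xs + s *\<^sub>R ?e))"
    have hd: "(h has_real_derivative h' s) (at s)" if "\<bar>s\<bar> < \<delta>" for s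
    proof -
      have "xs + s *\<^sub>R ?e \<in> ball x0 R" using inb[OF that] rR by blast
      then show ?thesis unfolding h_def h'_def
        by (intro DERIV_diff dir_deriv \<nu>diff wdiff)
    qed
    have hmin: "h 0 \<le> h s" if "\<bar>s\<bar> < \<delta>" for s
      unfolding h_def using minx[of "xs + s *\<^sub>R ?e"] inb[OF that, of i] by simp
    have "h' 0 = 0"
      using DERIV_local_min[OF hd[of 0] \<delta>] hmin \<delta> by simp
    then have g1: "pderiv_i \<nu>t i xs = pderiv_i wt i xs" by (simp add: h'_def)
    have xsR: "xs \<in> ball x0 R" using xsb rR by blast
    have d1: "pderiv_i \<nu>t i differentiable (at xs)"
      unfolding \<nu>t_def by (rule slice_pd_diff[OF sm open_ball xsR inU]) (use tsT in auto)
    have d2: "pderiv_i wt i differentiable (at xs)"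
      unfolding wt_def w_pd using w_pd2_hasd unfolding differentiable_def by blast
    have h'd: "(h' has_real_derivative (pderiv_i (pderiv_i \<nu>t i) i xs - pderiv_i (pderiv_i wt i) i xs)) (at 0)"
      unfolding h'_def by (intro DERIV_diff dir_deriv0 d1 d2)
    have "pderiv_i (pderiv_i \<nu>t i) i xs - pderiv_i (pderiv_i wt i) i xs \<ge> 0"
      by (rule second_deriv_min[OF \<delta> hd _ h'd hmin]) (use \<open>h' 0 = 0\<close> in auto)
    with g1 show ?thesis by simp
  qed

  define d where "d = real CARD('n)"
  have G: "grad \<nu>t xs = (-2*k) *\<^sub>R (xs - x0)"
  proof -
    have "grad \<nu>t xs = grad wt xs" unfolding grad_def using gl by (simp add: vec_eq_iff)
    then show ?thesis unfolding wt_def w_grad .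
  qed
  have Lap: "laplacian \<nu>t xs \<ge> -2*k*d"
  proof -
    have "laplacian wt xs \<le> laplacian \<nu>t xs" unfolding laplacian_def
      by (rule sum_mono) (use gl in auto)
    moreover have "laplacian wt xs = -2*k*d" unfolding wt_def d_def w_lap ..
    ultimately show ?thesis by simp
  qed
  have xsR: "xs \<in> cball x0 R" using xs(1) r by (simp add: dist_norm)
  have nx: "norm (xs - x0) \<le> R" using xsR by (simp add: dist_norm norm_minus_commute)
  have cs: "\<bar>grad V xs \<bullet> (xs - x0)\<bar> \<le> M * R"
  proof -
    have "\<bar>grad V xs \<bullet> (xs - x0)\<bar> \<le> norm (grad V xs) * norm (xs - x0)" by (rule Cauchy_Schwarz_ineq2)
    also have "\<dots> \<le> M * R" using M xsR nx by (intro mult_mono) auto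
    finally show ?thesis .
  qed
  have Lop: "Lop V \<nu>t xs \<ge> -2*k*(d + M*R)"
  proof -
    have e1: "grad V xs \<bullet> grad \<nu>t xs = -2*k*(grad V xs \<bullet> (xs - x0))"
      unfolding G by (rule inner_scaleR_right)
    have "-(grad V xs \<bullet> (xs - x0)) \<le> M*R" using cs by linarith
    then have "(2*k) * (-(grad V xs \<bullet> (xs - x0))) \<le> (2*k) * (M*R)"
      by (rule mult_left_mono) (use k in simp)
    then have e2: "grad V xs \<bullet> grad \<nu>t xs \<le> 2*k*(M*R)" unfolding e1 by (simp only: mult_minus_right mult_minus_left mult.assoc)
    have e3: "-2*k*(d + M*R) = -2*k*d - 2*k*(M*R)" by (simp add: algebra_simps)
    show ?thesis unfolding Lop_def e3 using Lap e2 by linarith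
  qed
  define q where "q = r\<^sup>2 - (norm (xs - x0))\<^sup>2"
  have q: "q > 0"
  proof -
    have "norm (xs - x0) < r" using xsb by (simp add: dist_norm norm_minus_commute)
    then have "(norm (xs - x0))\<^sup>2 < r\<^sup>2" by (simp add: power_strict_mono)
    then show ?thesis by (simp add: q_def)
  qed
  have \<nu>val: "\<nu> (xs,ts) = k * q" using f0 wf[of xs] by (simp add: \<nu>t_def wt_def q_def)
  have xsO: "xs \<in> \<Omega>" using xsb rR \<Omega> by blast
  define D where "D = deriv (\<lambda>s. \<nu> (xs, s)) ts"
  have Dval: "D = \<beta> * (k*q) * Lop V \<nu>t xs + (norm (grad \<nu>t xs))\<^sup>2"
  proof -
    have "D = \<beta> * \<nu> (xs, ts) * Lop V \<nu>t xs + (norm (grad \<nu>t xs))\<^sup>2"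
      using pde xsO tsT unfolding D_def \<nu>t_def by blast
    then show ?thesis unfolding \<nu>val .
  qed
  have "D \<ge> \<beta> * (k*q) * (-2*k*(d + M*R))"
  proof -
    have "\<beta> * (k*q) * (-2*k*(d + M*R)) \<le> \<beta> * (k*q) * Lop V \<nu>t xs"
      using Lop \<beta> k q by (intro mult_left_mono) auto
    moreover have "(norm (grad \<nu>t xs))\<^sup>2 \<ge> 0" by simp
    ultimately show ?thesis unfolding Dval by linarith
  qed
  moreover have "\<beta> * (k*q) * (2*k*(d + M*R)) = (8*\<beta>*\<epsilon>*(d + M*R)) * (\<epsilon>*q/P\<^sup>2)"
    using P by (simp add: k_def power2_eq_square field_simps)
  moreover have "(8*\<beta>*\<epsilon>*(d + M*R)) * (\<epsilon>*q/P\<^sup>2) \<le> 1 * (\<epsilon>*q/P\<^sup>2)"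
    using \<epsilon>M \<epsilon> q P unfolding d_def by (intro mult_right_mono) auto
  ultimately have Dge: "D \<ge> - (\<epsilon>*q/P\<^sup>2)" by linarith
  define F where "F = (\<lambda>s. \<nu> (xs,s) - 2*\<epsilon>*q/(s+\<tau>))"
  have Ff: "F s = f (xs,s)" for s unfolding F_def f_def q_def by simp
  have "(\<lambda>s. \<nu> (xs,s)) differentiable (at ts)"
    using slice_t_diff[OF smooth0[OF sm]] U xsO tsT by blast
  then have Dd: "((\<lambda>s. \<nu> (xs,s)) has_real_derivative D) (at ts)"
    unfolding D_def using DERIV_deriv_iff_real_differentiable by blast
  have wd: "((\<lambda>s. 2*\<epsilon>*q/(s+\<tau>)) has_real_derivative -(2*\<epsilon>*q)/P\<^sup>2) (at ts)"
    using P unfolding P_def by (auto intro!: derivative_eq_intros simp: power2_eq_square)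
  have Fd: "(F has_real_derivative D - (-(2*\<epsilon>*q)/P\<^sup>2)) (at ts)"
    unfolding F_def by (intro DERIV_diff Dd wd)
  have pos': "D - (-(2*\<epsilon>*q)/P\<^sup>2) > 0"
  proof -
    have "\<epsilon>*q/P\<^sup>2 > 0" using \<epsilon> q P by simp
    then show ?thesis using Dge by (simp add: field_simps)
  qed
  obtain dd where dd: "dd > 0" "\<And>hh. hh > 0 \<Longrightarrow> hh < dd \<Longrightarrow> F (ts - hh) < F ts"
    using DERIV_pos_inc_left[OF Fd pos'] by blast
  define hh where "hh = min dd ts / 2"
  have hh: "hh > 0" "hh < dd" "hh < ts" using dd xs(2) by (auto simp: hh_def)
  have "F (ts - hh) < 0" using dd(2)[OF hh(1,2)] Ff f0 by simp
  moreover have "F (ts - hh) > 0"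
  proof -
    have "ts - hh \<in> {0..<ts}" using hh by auto
    then show ?thesis using before xs(1) unfolding Ff by blast
  qed
  ultimately show False by simp
qed

theorem lemma2:
  fixes \<beta> c R :: real and x0 :: "real^'n" and V :: "real^'n \<Rightarrow> real"
  assumes "\<beta> > 0" and "c > 0" and "R > 0" and "smooth_on UNIV V"
  shows "\<exists>\<epsilon>>0. \<exists>\<tau>>0. \<forall>(T::real) (\<Omega>::(real^'n) set) (U::((real^'n) \<times> real) set)
           (\<nu>::(real^'n) \<times> real \<Rightarrow> real).
     T > 0 \<longrightarrow> open \<Omega> \<longrightarrow> ball x0 R \<subseteq> \<Omega> \<longrightarrow>
     open U \<longrightarrow> \<Omega> \<times> {0..T} \<subseteq> U \<longrightarrow> smooth_on U \<nu> \<longrightarrow>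
     (\<forall>x\<in>\<Omega>. \<forall>t\<in>{0..T}. \<nu> (x, t) > 0) \<longrightarrow>
     (\<forall>x\<in>\<Omega>. \<forall>t\<in>{0..T}.
        deriv (\<lambda>s. \<nu> (x, s)) t =
          \<beta> * \<nu> (x, t) * Lop V (\<lambda>y. \<nu> (y, t)) x + (norm (grad (\<lambda>y. \<nu> (y, t)) x))\<^sup>2) \<longrightarrow>
     (\<forall>x\<in>ball x0 R. \<nu> (x, 0) \<ge> c) \<longrightarrow>
     (\<forall>x\<in>ball x0 R. \<forall>t\<in>{0..T}.
        \<nu> (x, t) > \<epsilon> * (R\<^sup>2 - (norm (x - x0))\<^sup>2) / (t + \<tau>))"
proof -
  have gc: "continuous_on UNIV (grad V)"
  proof -
    have "continuous_on UNIV (\<lambda>y. (\<chi> i. pderiv_i V i y))"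
    proof (rule continuous_on_vec_lambda)
      fix i
      have "\<forall>y\<in>UNIV. isCont (\<lambda>q. frechet_derivative V (at q) (axis i 1)) y"
        using smooth1[OF assms(4)] differentiable_imp_continuous_within by blast
      then show "continuous_on UNIV (\<lambda>y. pderiv_i V i y)"
        unfolding pderiv_i_def using continuous_at_imp_continuous_on by blast
    qed
    then show ?thesis unfolding grad_def[abs_def] by simp
  qed
  have "compact (grad V ` cball x0 R)"
    by (rule compact_continuous_image[OF continuous_on_subset[OF gc] compact_cball]) simp
  then obtain M where M: "M > 0" "\<forall>z\<in>grad V ` cball x0 R. norm z \<le> M"
    using compact_imp_bounded bounded_pos by metis
  define d where "d = real CARD('n)"
  have d: "d \<ge> 1" unfolding d_def by simp
  define \<epsilon> where "\<epsilon> = 1 / (8 * \<beta> * (d + M * R))"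
  have pd: "8 * \<beta> * (d + M * R) > 0" using assms(1,3) M d by (simp add: add_pos_nonneg)
  have \<epsilon>: "\<epsilon> > 0" using pd by (simp add: \<epsilon>_def)
  have \<epsilon>M: "8 * \<beta> * \<epsilon> * (real CARD('n) + M * R) \<le> 1"
    using pd unfolding \<epsilon>_def d_def by simp
  define \<tau> where "\<tau> = 4 * \<epsilon> * R\<^sup>2 / c"
  have \<tau>: "\<tau> > 0" using \<epsilon> assms by (simp add: \<tau>_def)
  have \<tau>c: "2 * \<epsilon> * R\<^sup>2 / \<tau> < c"
  proof -
    have "2 * \<epsilon> * R\<^sup>2 / \<tau> = c / 2" using \<epsilon> assms by (simp add: \<tau>_def field_simps)
    then show ?thesis using assms(2) by simp
  qed
  show ?thesis
    apply (rule exI[of _ \<epsilon>], rule conjI[OF \<epsilon>], rule exI[of _ \<tau>], rule conjI[OF \<tau>])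
    apply (intro allI impI ballI)
    subgoal premises prems for T \<Omega> U \<nu> x t
  proof -
    note T = prems(1) and \<Omega> = prems(3) and U = prems(5) and sm = prems(6) and pos = prems(7)
      and pde = prems(8) and init = prems(9) and x = prems(10) and t = prems(11)
    define \<rho> where "\<rho> = norm (x - x0)"
    have \<rho>: "0 \<le> \<rho>" "\<rho> < R" using x by (auto simp: \<rho>_def dist_norm norm_minus_commute)
    define r where "r = sqrt ((R\<^sup>2 + \<rho>\<^sup>2) / 2)"
    have r2: "r\<^sup>2 = (R\<^sup>2 + \<rho>\<^sup>2) / 2" unfolding r_def by simp
    have "\<rho>\<^sup>2 < R\<^sup>2" using \<rho> by (simp add: power_strict_mono)
    then have lt1: "\<rho>\<^sup>2 < r\<^sup>2" and lt2: "r\<^sup>2 < R\<^sup>2" unfolding r2 by auto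
    have r0: "r \<ge> 0" unfolding r_def by simp
    have "\<rho> < r" using lt1 r0 by (meson power_less_imp_less_base)
    have "r < R" using lt2 assms(3) by (meson power_less_imp_less_base less_imp_le)
    have "r > 0" using \<open>\<rho> < r\<close> \<rho> by simp
    have xr: "x \<in> cball x0 r" using \<open>\<rho> < r\<close> by (simp add: \<rho>_def dist_norm norm_minus_commute)
    have Mb: "\<forall>y\<in>cball x0 R. norm (grad V y) \<le> M" using M(2) by blast
    have "\<nu> (x,t) > 2 * \<epsilon> * (r\<^sup>2 - (norm (x - x0))\<^sup>2) / (t + \<tau>)"
      using main_comp[OF assms(1) \<epsilon> \<tau> \<open>r > 0\<close> \<open>r < R\<close> less_imp_le[OF M(1)] Mb \<epsilon>M \<tau>c T \<Omega> U sm pos pde init] xr t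
      by blast
    moreover have "2 * \<epsilon> * (r\<^sup>2 - (norm (x - x0))\<^sup>2) = \<epsilon> * (R\<^sup>2 - (norm (x - x0))\<^sup>2)"
    proof -
      have "(norm (x - x0))\<^sup>2 = \<rho>\<^sup>2" by (simp add: \<rho>_def)
      then show ?thesis using r2 by (simp add: field_simps)
    qed
    ultimately show ?thesis by simp
  qed
  done
qed

end
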